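(* There is an absolute constant $C>0$ such that for every symmetric convex body $K$ in $\mathbb R^n$, $\vartheta(\gamma_n,K)\leqslant C\sqrt n$.
   Context: $\gamma_n$ is the standard Gaussian measure on $\mathbb R^n$, $Z\sim\gamma_n$, $F_K(t)=\gamma_n(\{x:\|x\|_K\leqslant t\})$ with density $f_K=F_K'$, $m$ is the median of $\|Z\|_K$, and $\vartheta(\gamma_n,K)=mf_K(m)$. *)

theory Defs
  imports "HOL-Probability.Probability"
begin

text \<open>Model of R^n: functions nat => real vanishing at all indices >= n.
  The topology on nat => real is the product topology (library instance), which on
  the subspace Rn n coincides with the Euclidean topology.\<close>

definition Rn :: "nat \<Rightarrow> (nat \<Rightarrow> real) set" where
  "Rn n = {x. \<forall>i\<ge>n. x i = 0}"

definition gauss_space :: "nat \<Rightarrow> (nat \<Rightarrow> real) measure" where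
  "gauss_space n = PiM {..<n} (\<lambda>_. density lborel std_normal_density)"

definition embed :: "nat \<Rightarrow> (nat \<Rightarrow> real) \<Rightarrow> (nat \<Rightarrow> real)" where
  "embed n x = (\<lambda>i. if i < n then x i else 0)"

definition gamma :: "nat \<Rightarrow> (nat \<Rightarrow> real) set \<Rightarrow> real" where
  "gamma n A = measure (gauss_space n) {x \<in> space (gauss_space n). embed n x \<in> A}"

definition symmetric_convex_body :: "nat \<Rightarrow> (nat \<Rightarrow> real) set \<Rightarrow> bool" where
  "symmetric_convex_body n K \<longleftrightarrow>
     K \<subseteq> Rn n \<and>
     compact K \<and>
     (\<forall>x\<in>K. \<forall>y\<in>K. \<forall>u::real. 0 \<le> u \<and> u \<le> 1 \<longrightarrow> (\<lambda>i. u * x i + (1 - u) * y i) \<in> K) \<and>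
     (\<exists>U. openin (top_of_set (Rn n)) U \<and> U \<noteq> {} \<and> U \<subseteq> K) \<and>
     (\<forall>x\<in>K. (\<lambda>i. - x i) \<in> K)"

definition gauge :: "(nat \<Rightarrow> real) set \<Rightarrow> (nat \<Rightarrow> real) \<Rightarrow> real" where
  "gauge K x = Inf {t::real. t > 0 \<and> (\<exists>y\<in>K. x = (\<lambda>i. t * y i))}"

definition F_K :: "nat \<Rightarrow> (nat \<Rightarrow> real) set \<Rightarrow> real \<Rightarrow> real" where
  "F_K n K t = gamma n {x \<in> Rn n. gauge K x \<le> t}"

definition is_median :: "nat \<Rightarrow> (nat \<Rightarrow> real) set \<Rightarrow> real \<Rightarrow> bool" where
  "is_median n K m \<longleftrightarrow>
     gamma n {x \<in> Rn n. gauge K x \<le> m} \<ge> 1/2 \<and> gamma n {x \<in> Rn n. gauge K x \<ge> m} \<ge> 1/2"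

definition vartheta :: "nat \<Rightarrow> (nat \<Rightarrow> real) set \<Rightarrow> real \<Rightarrow> real" where
  "vartheta n K m = m * deriv (F_K n K) m"

end

theory Submission
  imports Defs
begin

lemma scb_basic:
  assumes "symmetric_convex_body n K"
  shows "K \<subseteq> Rn n" "compact K" "closed K"
    "\<And>x y u. x \<in> K \<Longrightarrow> y \<in> K \<Longrightarrow> 0 \<le> u \<Longrightarrow> u \<le> 1 \<Longrightarrow> (\<lambda>i. u * x i + (1 - u) * y i) \<in> K"
    "\<And>x. x \<in> K \<Longrightarrow> (\<lambda>i. - x i) \<in> K"
  using assms unfolding symmetric_convex_body_def by (auto intro: compact_imp_closed)

lemma scb_absorb:
  assumes "symmetric_convex_body n K" "x \<in> Rn n"
  shows "\<exists>s>0. (\<lambda>i. s * x i) \<in> K"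
proof -
  from assms obtain U where U: "openin (top_of_set (Rn n)) U" "U \<noteq> {}" "U \<subseteq> K"
    unfolding symmetric_convex_body_def by blast
  then obtain V where V: "open V" "U = Rn n \<inter> V" by (auto simp: openin_open)
  obtain u where u: "u \<in> U" using U by blast
  define h where "h = (\<lambda>s::real. (\<lambda>i. u i + s * x i))"
  have hc: "continuous_on UNIV h" unfolding h_def
    by (intro continuous_on_coordinatewise_then_product continuous_intros)
  have "open (h -` V)" using hc V(1) by (simp add: open_vimage)
  moreover have "0 \<in> h -` V" using u V by (simp add: h_def)
  ultimately obtain e where e: "e > 0" "ball 0 e \<subseteq> h -` V" by (meson openE)
  have "e/2 \<in> ball 0 e" using e by simp
  then have "h (e/2) \<in> V" using e by blast
  moreover have "h (e/2) \<in> Rn n" using u V assms(2) by (auto simp: h_def Rn_def)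
  ultimately have hK: "h (e/2) \<in> K" using V U by auto
  have uK: "(\<lambda>i. - u i) \<in> K" using u U by (intro scb_basic(5)[OF assms(1)]) auto
  have "(\<lambda>i. (1/2) * h (e/2) i + (1 - 1/2) * (- u i)) \<in> K"
    using scb_basic(4)[OF assms(1) hK uK, of "1/2"] by simp
  moreover have "(\<lambda>i. (1/2) * h (e/2) i + (1 - 1/2) * (- u i)) = (\<lambda>i. (e/4) * x i)"
    by (auto simp: h_def algebra_simps)
  ultimately show ?thesis using e by (intro exI[of _ "e/4"]) auto
qed

lemma scb_zero:
  assumes "symmetric_convex_body n K"
  shows "(\<lambda>i. 0) \<in> K"
proof -
  obtain x where x: "x \<in> K" using assms unfolding symmetric_convex_body_def by blast
  have "(\<lambda>i. (1/2) * x i + (1 - 1/2) * (- x i)) \<in> K"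
    using scb_basic(4)[OF assms x scb_basic(5)[OF assms x], of "1/2"] by simp
  then show ?thesis by simp
qed

lemma scb_shrink:
  assumes "symmetric_convex_body n K" "y \<in> K" "0 \<le> a" "a \<le> 1"
  shows "(\<lambda>i. a * y i) \<in> K"
proof -
  have "(\<lambda>i. a * y i + (1 - a) * 0) \<in> K"
    using scb_basic(4)[OF assms(1) assms(2) scb_zero[OF assms(1)] assms(3,4)] by simp
  then show ?thesis by simp
qed

lemma gauge_nonneg:
  assumes "symmetric_convex_body n K" "x \<in> Rn n"
  shows "gauge K x \<ge> 0"
proof -
  define A where "A = {t::real. t > 0 \<and> (\<exists>y\<in>K. x = (\<lambda>i. t * y i))}"
  obtain s where s: "s > 0" "(\<lambda>i. s * x i) \<in> K" using scb_absorb[OF assms] by blast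
  have "x = (\<lambda>i. (1/s) * (s * x i))" using s by auto
  then have "1/s \<in> A" unfolding A_def
    using s by (intro CollectI conjI bexI[of _ "(\<lambda>i. s * x i)"]) auto
  then have ne: "A \<noteq> {}" by blast
  have "0 \<le> Inf A" by (rule cInf_greatest[OF ne]) (auto simp: A_def)
  then show ?thesis unfolding gauge_def A_def .
qed

lemma gauge_le_iff:
  assumes K: "symmetric_convex_body n K" and x: "x \<in> Rn n" and t: "t > 0"
  shows "gauge K x \<le> t \<longleftrightarrow> (\<lambda>i. x i / t) \<in> K"
proof -
  define A where "A = {t::real. t > 0 \<and> (\<exists>y\<in>K. x = (\<lambda>i. t * y i))}"
  have memA: "s \<in> A \<longleftrightarrow> s > 0 \<and> (\<lambda>i. x i / s) \<in> K" for s
  proof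
    assume "s \<in> A"
    then obtain y where "s > 0" "y \<in> K" "x = (\<lambda>i. s * y i)" unfolding A_def by blast
    then show "s > 0 \<and> (\<lambda>i. x i / s) \<in> K" by simp
  next
    assume "s > 0 \<and> (\<lambda>i. x i / s) \<in> K"
    then show "s \<in> A" unfolding A_def by (auto intro!: bexI[of _ "(\<lambda>i. x i / s)"])
  qed
  obtain s where s: "s > 0" "(\<lambda>i. s * x i) \<in> K" using scb_absorb[OF K x] by blast
  have "1/s \<in> A" using s by (simp add: memA mult.commute)
  hence ne: "A \<noteq> {}" by blast
  have bdd: "bdd_below A" unfolding A_def by (rule bdd_belowI[of _ 0]) auto
  have up: "s' \<in> A" if "s \<in> A" "s \<le> s'" for s s'
  proof -
    have sp: "s > 0" "(\<lambda>i. x i / s) \<in> K" using that memA by auto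
    have "0 \<le> s/s'" "s/s' \<le> 1" using sp that by (auto simp: divide_le_eq_1)
    from scb_shrink[OF K sp(2) this] have "(\<lambda>i. (s/s') * (x i / s)) \<in> K" .
    moreover have "(\<lambda>i. (s/s') * (x i / s)) = (\<lambda>i. x i / s')" using sp by auto
    ultimately show ?thesis using memA sp that by auto
  qed
  show ?thesis
  proof
    assume "(\<lambda>i. x i / t) \<in> K"
    then have "t \<in> A" using memA t by auto
    then show "gauge K x \<le> t" unfolding gauge_def A_def[symmetric] using bdd by (rule cInf_lower)
  next
    assume "gauge K x \<le> t"
    then have inf: "Inf A \<le> t" unfolding gauge_def A_def .
    have gt: "(\<lambda>i. x i / r) \<in> K" if "r > t" for r
    proof -
      have "Inf A < r" using inf that by simp
      then obtain a where "a \<in> A" "a < r" using cInf_lessD[OF ne] by blast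
      then have "r \<in> A" using up by auto
      then show ?thesis using memA by auto
    qed
    define f where "f = (\<lambda>r::real. (\<lambda>i. x i / r))"
    have fc: "continuous_on {t..} f" unfolding f_def using t
      by (intro continuous_on_coordinatewise_then_product continuous_intros) auto
    have cl: "closed ({t..} \<inter> f -` K)"
      using continuous_closed_preimage[OF fc] scb_basic(3)[OF K] by auto
    have sub: "{t<..} \<subseteq> {t..} \<inter> f -` K" using gt by (auto simp: f_def)
    have l1: "t islimpt {t<..<t+1}" by (rule islimpt_greaterThanLessThan1) simp
    have "t islimpt {t<..}" by (rule islimpt_subset[OF l1]) auto
    then have "t islimpt ({t..} \<inter> f -` K)" using sub by (rule islimpt_subset)
    then have "t \<in> {t..} \<inter> f -` K" using cl closed_limpt by blast
    then show "(\<lambda>i. x i / t) \<in> K" by (simp add: f_def)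
  qed
qed

abbreviation "GG \<equiv> density lborel std_normal_density"

definition qf :: "nat \<Rightarrow> (nat \<Rightarrow> real) \<Rightarrow> real" where
  "qf n y = (\<Sum>i<n. (y i)\<^sup>2)"

lemma prob_GG: "prob_space GG"
  using prob_space_normal_density[of 1] by simp

lemma pps_GG: "product_prob_space (\<lambda>_::nat. GG)"
  by (rule product_prob_spaceI) (rule prob_GG)

lemma GG_ic: "integrable GG (\<lambda>x. c)"
proof -
  interpret prob_space GG by (rule prob_GG)
  show ?thesis by simp
qed

lemma GG_meas: "measure GG UNIV = 1"
  using prob_space.prob_space[OF prob_GG] by simp

lemma GG_m0': "integral\<^sup>L GG (\<lambda>x. c) = (c::real)"
  using lebesgue_integral_const[where a=c and M=GG] prob_space.prob_space[OF prob_GG] by simp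

lemma GG_mom: "integral\<^sup>L GG (\<lambda>x. x ^ k) = integral\<^sup>L lborel (\<lambda>x. std_normal_density x * x ^ k)"
  by (subst integral_density) (auto simp: normal_density_nonneg)

lemma GG_int: "integrable GG (\<lambda>x. x ^ k)"
  by (subst integrable_density) (auto simp: normal_density_nonneg integrable_std_normal_moment)

lemma GG_m0: "integral\<^sup>L GG (\<lambda>x. 1) = (1::real)"
  by (rule GG_m0')

lemma GG_h: "has_bochner_integral GG (\<lambda>x. x ^ k) (integral\<^sup>L GG (\<lambda>x. x ^ k))"
  by (rule has_bochner_integral_integrable[OF GG_int])

lemma GG_h0: "has_bochner_integral GG (\<lambda>x. 1) (1::real)"
  using has_bochner_integral_integrable[OF GG_ic[of "1::real"]] unfolding GG_m0 .

lemma GG_h2: "has_bochner_integral GG (\<lambda>x. x ^ 2) 1"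
  using GG_h[of 2] GG_mom[of 2] integral_std_normal_moment_even[of 1] by simp

lemma GG_h4: "has_bochner_integral GG (\<lambda>x. x ^ 4) 3"
  using GG_h[of 4] GG_mom[of 4] integral_std_normal_moment_even[of 2] by (simp add: fact_numeral)

lemma GG_ha: "has_bochner_integral GG (\<lambda>x. x\<^sup>2 - 1) 0"
  using has_bochner_integral_diff[OF GG_h2 GG_h0] by simp

lemma GG_hb: "has_bochner_integral GG (\<lambda>x. (x\<^sup>2 - 1) * (x\<^sup>2 - 1)) 2"
proof -
  have "(\<lambda>x::real. (x\<^sup>2 - 1) * (x\<^sup>2 - 1)) = (\<lambda>x. x ^ 4 - 2 * x ^ 2 + 1)"
    by (auto simp: algebra_simps power2_eq_square power4_eq_xxxx)
  moreover have "has_bochner_integral GG (\<lambda>x. x ^ 4 - 2 * x ^ 2 + 1) (3 - 2 * 1 + 1)"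
    by (intro has_bochner_integral_add has_bochner_integral_diff has_bochner_integral_mult_right
        GG_h0 GG_h2 GG_h4)
  ultimately show ?thesis by simp
qed

lemma GG_a: "integral\<^sup>L GG (\<lambda>x. x\<^sup>2 - 1) = 0"
  using GG_ha by (rule has_bochner_integral_integral_eq)
lemma GG_b: "integral\<^sup>L GG (\<lambda>x. (x\<^sup>2 - 1) * (x\<^sup>2 - 1)) = 2"
  using GG_hb by (rule has_bochner_integral_integral_eq)
lemma GG_int_a: "integrable GG (\<lambda>x. x\<^sup>2 - 1)"
  using GG_ha by (rule integrable.intros)
lemma GG_int_b: "integrable GG (\<lambda>x. (x\<^sup>2 - 1) * (x\<^sup>2 - 1))"
  using GG_hb by (rule integrable.intros)

definition fij :: "nat \<Rightarrow> nat \<Rightarrow> nat \<Rightarrow> real \<Rightarrow> real" where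
  "fij i j k x = (if k = i then x\<^sup>2 - 1 else 1) * (if k = j then x\<^sup>2 - 1 else 1)"

lemma fij_int: "integrable GG (fij i j k)"
  unfolding fij_def
  using GG_int_a GG_int_b GG_ic by (cases "k = i"; cases "k = j") auto

lemma fij_integral: "integral\<^sup>L GG (fij i j k) =
   (if k = i \<and> k = j then 2 else if k = i \<or> k = j then 0 else 1)"
  unfolding fij_def using GG_a GG_b GG_m0' GG_meas by auto

lemma fij_prod:
  assumes "i < n" "j < n"
  shows "(\<Prod>k<n. fij i j k (z k)) = ((z i)\<^sup>2 - 1) * ((z j)\<^sup>2 - 1)"
  using assms by (simp add: fij_def prod.distrib prod.delta)

lemma variance_qf:
  shows "integrable (gauss_space n) (\<lambda>z. (qf n z - n)\<^sup>2)"
    "integral\<^sup>L (gauss_space n) (\<lambda>z. (qf n z - n)\<^sup>2) = 2 * n"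
proof -
  interpret P: product_prob_space "\<lambda>_::nat. GG" "{..<n}" by (rule pps_GG)
  have N: "gauss_space n = PiM {..<n} (\<lambda>_. GG)" by (simp add: gauss_space_def)
  have eq: "(qf n z - n)\<^sup>2 = (\<Sum>i<n. \<Sum>j<n. (\<Prod>k<n. fij i j k (z k)))" for z
  proof -
    have "qf n z - n = (\<Sum>i<n. ((z i)\<^sup>2 - 1))"
      by (simp add: qf_def sum_subtractf)
    then have "(qf n z - n)\<^sup>2 = (\<Sum>i<n. \<Sum>j<n. ((z i)\<^sup>2 - 1) * ((z j)\<^sup>2 - 1))"
      by (simp add: power2_eq_square sum_product)
    then show ?thesis by (simp add: fij_prod)
  qed
  have ti: "integrable (PiM {..<n} (\<lambda>_. GG)) (\<lambda>z. \<Prod>k<n. fij i j k (z k))" for i j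
    by (rule P.product_integrable_prod) (auto intro: fij_int)
  have tv: "integral\<^sup>L (PiM {..<n} (\<lambda>_. GG)) (\<lambda>z. \<Prod>k<n. fij i j k (z k)) = (if i = j then 2 else 0)"
    if "i < n" "j < n" for i j
  proof -
    have "integral\<^sup>L (PiM {..<n} (\<lambda>_. GG)) (\<lambda>z. \<Prod>k<n. fij i j k (z k)) = (\<Prod>k<n. integral\<^sup>L GG (fij i j k))"
      by (rule P.product_integral_prod) (auto intro: fij_int)
    also have "\<dots> = (\<Prod>k<n. (if k = i \<and> k = j then 2 else if k = i \<or> k = j then 0 else 1))"
      by (simp add: fij_integral)
    also have "\<dots> = (if i = j then 2 else 0)"
    proof (cases "i = j")
      case True
      have "(\<Prod>k<n. (if k = i \<and> k = j then 2 else if k = i \<or> k = j then 0 else (1::real)))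
          = (\<Prod>k<n. (if k = j then 2 else 1))" using True by (intro prod.cong) auto
      then show ?thesis using that True by (simp add: prod.delta)
    next
      case False
      have "(\<Prod>k<n. (if k = i \<and> k = j then 2 else if k = i \<or> k = j then 0 else (1::real))) = 0"
        using that False by (intro prod_zero) auto
      then show ?thesis using False by simp
    qed
    finally show ?thesis .
  qed
  show "integrable (gauss_space n) (\<lambda>z. (qf n z - n)\<^sup>2)"
    unfolding N eq using ti by auto
  have "integral\<^sup>L (gauss_space n) (\<lambda>z. (qf n z - n)\<^sup>2) =
      (\<Sum>i<n. \<Sum>j<n. integral\<^sup>L (PiM {..<n} (\<lambda>_. GG)) (\<lambda>z. \<Prod>k<n. fij i j k (z k)))"
    unfolding N eq using ti by (simp add: integral_sum integrable_sum)
  also have "\<dots> = (\<Sum>i<n. \<Sum>j<n. (if i = j then 2 else 0))"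
    by (intro sum.cong refl) (simp add: tv)
  also have "\<dots> = 2 * n" by simp
  finally show "integral\<^sup>L (gauss_space n) (\<lambda>z. (qf n z - n)\<^sup>2) = 2 * n" .
qed

definition Lb :: "nat \<Rightarrow> (nat \<Rightarrow> real) measure" where
  "Lb n = PiM {..<n} (\<lambda>_. lborel)"

definition sc :: "nat \<Rightarrow> real \<Rightarrow> (nat \<Rightarrow> real) \<Rightarrow> (nat \<Rightarrow> real)" where
  "sc n t = compose {..<n} (\<lambda>x. x / t)"

definition gd :: "nat \<Rightarrow> real \<Rightarrow> (nat \<Rightarrow> real) \<Rightarrow> real" where
  "gd n t y = (t / sqrt (2 * pi)) ^ n * exp (- (t\<^sup>2 * qf n y) / 2)"

lemma psf_lborel: "product_sigma_finite (\<lambda>_::nat. lborel)"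
  unfolding product_sigma_finite_def using sigma_finite_lborel by simp

lemma indicator_PiE_prod:
  assumes "y \<in> extensional I" "finite I"
  shows "(indicator (PiE I A) y :: ennreal) = (\<Prod>i\<in>I. indicator (A i) (y i))"
proof (cases "\<forall>i\<in>I. y i \<in> A i")
  case True
  then have "y \<in> PiE I A" using assms by (auto simp: PiE_def)
  then show ?thesis using True by simp
next
  case False
  then obtain i where i: "i \<in> I" "y i \<notin> A i" by blast
  then have "y \<notin> PiE I A" by auto
  moreover have "(\<Prod>i\<in>I. (indicator (A i) (y i) :: ennreal)) = 0"
    using i assms by (intro prod_zero bexI[of _ i]) auto
  ultimately show ?thesis by simp
qed

lemma PiM_density_prob:
  fixes f :: "real \<Rightarrow> real"
  assumes fin: "finite I" and fm[measurable]: "f \<in> borel_measurable borel" and fnn: "\<And>x. f x \<ge> 0"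
    and pr: "prob_space (density lborel f)"
  shows "PiM I (\<lambda>_::nat. density lborel f) = density (PiM I (\<lambda>_. lborel)) (\<lambda>y. \<Prod>i\<in>I. f (y i))"
proof -
  interpret D: product_prob_space "\<lambda>_::nat. density lborel f" I
    by (rule product_prob_spaceI) (rule pr)
  interpret L: product_sigma_finite "\<lambda>_::nat. lborel" by (rule psf_lborel)
  have "density (PiM I (\<lambda>_. lborel)) (\<lambda>y. \<Prod>i\<in>I. f (y i)) = PiM I (\<lambda>_::nat. density lborel f)"
  proof (rule D.PiM_eqI[OF fin])
    show "sets (density (PiM I (\<lambda>_. lborel)) (\<lambda>y. \<Prod>i\<in>I. f (y i))) = sets (PiM I (\<lambda>_::nat. density lborel f))"
      by (simp only: sets_density) (intro sets_PiM_cong; simp)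
  next
    fix A assume A: "\<And>i. i \<in> I \<Longrightarrow> A i \<in> sets (density lborel f)"
    then have A': "\<And>i. i \<in> I \<Longrightarrow> A i \<in> sets borel" by simp
    have PA: "PiE I A \<in> sets (PiM I (\<lambda>_. lborel))"
      using A' by (intro sets_PiM_I_finite fin) auto
    have "emeasure (density (PiM I (\<lambda>_. lborel)) (\<lambda>y. \<Prod>i\<in>I. f (y i))) (PiE I A)
        = (\<integral>\<^sup>+ y. ennreal (\<Prod>i\<in>I. f (y i)) * indicator (PiE I A) y \<partial>PiM I (\<lambda>_. lborel))"
      using PA by (subst emeasure_density) auto
    also have "\<dots> = (\<integral>\<^sup>+ y. (\<Prod>i\<in>I. ennreal (f (y i)) * indicator (A i) (y i)) \<partial>PiM I (\<lambda>_. lborel))"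
    proof (rule nn_integral_cong)
      fix y :: "nat \<Rightarrow> real" assume "y \<in> space (PiM I (\<lambda>_::nat. lborel))"
      then have "y \<in> extensional I" by (simp add: space_PiM PiE_def)
      then show "ennreal (\<Prod>i\<in>I. f (y i)) * indicator (PiE I A) y
          = (\<Prod>i\<in>I. ennreal (f (y i)) * indicator (A i) (y i))"
        using fin fnn by (simp add: indicator_PiE_prod prod.distrib prod_ennreal)
    qed
    also have "\<dots> = (\<Prod>i\<in>I. \<integral>\<^sup>+ x. ennreal (f x) * indicator (A i) x \<partial>lborel)"
      using A' by (intro L.product_nn_integral_prod fin) auto
    also have "\<dots> = (\<Prod>i\<in>I. emeasure (density lborel f) (A i))"
      using A' by (intro prod.cong refl) (simp add: emeasure_density)
    finally show "emeasure (density (PiM I (\<lambda>_. lborel)) (\<lambda>y. \<Prod>i\<in>I. f (y i))) (PiE I A)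
        = (\<Prod>i\<in>I. emeasure (density lborel f) (A i))" .
  qed
  then show ?thesis by simp
qed

lemma gd_prod:
  assumes "t > 0"
  shows "(\<Prod>i<n. normal_density 0 (1/t) (y i)) = gd n t y"
proof -
  have nd: "normal_density 0 (1/t) x = (t / sqrt (2 * pi)) * exp (- (t\<^sup>2 * (x\<^sup>2)) / 2)" for x
    using assms by (simp add: normal_density_def real_sqrt_divide power_divide real_sqrt_mult field_simps)
  have "(\<Prod>i<n. normal_density 0 (1/t) (y i)) = (\<Prod>i<n. (t / sqrt (2 * pi)) * exp (- (t\<^sup>2 * (y i)\<^sup>2) / 2))"
    by (simp add: nd)
  also have "\<dots> = (t / sqrt (2 * pi)) ^ n * exp (\<Sum>i<n. - (t\<^sup>2 * (y i)\<^sup>2) / 2)"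
    by (simp only: prod.distrib prod_constant card_lessThan exp_sum[OF finite_lessThan])
  also have "(\<Sum>i<n. - (t\<^sup>2 * (y i)\<^sup>2) / 2) = - (t\<^sup>2 * qf n y) / 2"
    by (simp add: qf_def sum_distrib_left sum_divide_distrib sum_negf)
  finally show ?thesis by (simp add: gd_def)
qed

lemma sets_gauss: "sets (gauss_space n) = sets (Lb n)"
  unfolding gauss_space_def Lb_def by (intro sets_PiM_cong) auto

lemma space_gauss: "space (gauss_space n) = space (Lb n)"
  using sets_eq_imp_space_eq[OF sets_gauss] .

lemma distr_GG_scale:
  assumes "t > 0"
  shows "distr GG GG (\<lambda>x. x / t) = density lborel (normal_density 0 (1/t))"
proof -
  interpret prob_space GG by (rule prob_GG)
  have "distributed GG lborel (\<lambda>x. x) (normal_density 0 1)"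
    unfolding distributed_def by (simp add: distr_id2)
  from normal_density_affine[OF this, of "1/t" 0] assms
  have "distributed GG lborel (\<lambda>x. 1/t * x) (normal_density 0 (1/t))" by simp
  then have d: "distr GG lborel (\<lambda>x. 1/t * x) = density lborel (normal_density 0 (1/t))"
    unfolding distributed_def by blast
  have "distr GG GG (\<lambda>x. x / t) = distr GG lborel (\<lambda>x. 1/t * x)"
    by (intro distr_cong) auto
  also note d
  finally show ?thesis .
qed

lemma sc_meas: "sc n t \<in> measurable (gauss_space n) (gauss_space n)"
  unfolding sc_def compose_def gauss_space_def by measurable

lemma distr_sc:
  assumes "t > 0"
  shows "distr (gauss_space n) (gauss_space n) (sc n t) = density (Lb n) (gd n t)"
proof -
  have "distr (gauss_space n) (gauss_space n) (sc n t) = PiM {..<n} (\<lambda>_. distr GG GG (\<lambda>x. x / t))"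
    unfolding gauss_space_def sc_def
    by (rule distr_PiM_finite_prob_space') (auto intro: prob_GG)
  also have "\<dots> = PiM {..<n} (\<lambda>_. density lborel (normal_density 0 (1/t)))"
    using assms by (simp add: distr_GG_scale)
  also have "\<dots> = density (Lb n) (\<lambda>y. \<Prod>i<n. normal_density 0 (1/t) (y i))"
    unfolding Lb_def using assms
    by (intro PiM_density_prob) (auto intro: prob_space_normal_density normal_density_nonneg)
  also have "\<dots> = density (Lb n) (gd n t)"
    using assms by (simp add: gd_prod)
  finally show ?thesis .
qed

lemma gd_nonneg: "t > 0 \<Longrightarrow> gd n t y \<ge> 0"
  by (simp add: gd_def)

lemma gd_meas[measurable]: "gd n t \<in> borel_measurable (Lb n)"
  unfolding gd_def qf_def Lb_def by measurable

lemma KI: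
  assumes "t > 0" and h[measurable]: "h \<in> borel_measurable (Lb n)"
  shows "(\<integral>y. gd n t y * h y \<partial>Lb n) = (\<integral>z. h (sc n t z) \<partial>gauss_space n)"
proof -
  have "(\<integral>y. gd n t y * h y \<partial>Lb n) = (\<integral>y. h y \<partial>density (Lb n) (gd n t))"
    using assms by (subst integral_density) (auto simp: gd_nonneg)
  also have "\<dots> = (\<integral>y. h y \<partial>distr (gauss_space n) (gauss_space n) (sc n t))"
    using assms by (simp add: distr_sc)
  also have "\<dots> = (\<integral>z. h (sc n t z) \<partial>gauss_space n)"
    using h sc_meas by (subst integral_distr) (auto simp: measurable_cong_sets[OF sets_gauss refl])
  finally show ?thesis .
qed

lemma DERIV_integral_dominated:
  fixes g :: "real \<Rightarrow> 'a \<Rightarrow> real"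
  assumes meas: "\<And>t. g t \<in> borel_measurable M" and meas': "g' \<in> borel_measurable M"
    and r: "r > 0"
    and int: "\<And>t. \<bar>t - m\<bar> < r \<Longrightarrow> integrable M (g t)"
    and der: "\<And>x. x \<in> space M \<Longrightarrow> ((\<lambda>t. g t x) has_real_derivative g' x) (at m)"
    and w: "integrable M w"
    and bnd: "\<And>h x. h \<noteq> 0 \<Longrightarrow> \<bar>h\<bar> < r \<Longrightarrow> x \<in> space M \<Longrightarrow> \<bar>(g (m + h) x - g m x) / h\<bar> \<le> w x"
  shows "((\<lambda>t. \<integral>x. g t x \<partial>M) has_real_derivative (\<integral>x. g' x \<partial>M)) (at m)"
  unfolding DERIV_def
proof (subst tendsto_at_iff_sequentially, intro allI impI)
  fix X :: "nat \<Rightarrow> real"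
  assume X0: "\<forall>i. X i \<in> UNIV - {0}" and X: "X \<longlonglongrightarrow> 0"
  from X r obtain N where N: "\<And>i. i \<ge> N \<Longrightarrow> \<bar>X i\<bar> < r"
    by (metis LIMSEQ_iff diff_zero real_norm_def)
  define s where "s = (\<lambda>i x. (g (m + X (i + N)) x - g m x) / X (i + N))"
  have Xn: "X (i + N) \<noteq> 0" "\<bar>X (i + N)\<bar> < r" for i using X0 N by auto
  have "(\<lambda>i. integral\<^sup>L M (s i)) \<longlonglongrightarrow> integral\<^sup>L M g'"
  proof (rule integral_dominated_convergence[OF meas' _ w])
    show "s i \<in> borel_measurable M" for i unfolding s_def using meas by measurable
    show "AE x in M. (\<lambda>i. s i x) \<longlonglongrightarrow> g' x"
    proof (rule AE_I2)
      fix x assume x: "x \<in> space M"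
      have "((\<lambda>h. (g (m + h) x - g m x) / h) \<longlongrightarrow> g' x) (at 0)"
        using der[OF x] unfolding DERIV_def .
      then have A: "\<forall>X. (\<forall>i. X i \<in> UNIV - {0}) \<longrightarrow> X \<longlonglongrightarrow> 0 \<longrightarrow>
          (\<lambda>i. (g (m + X i) x - g m x) / X i) \<longlonglongrightarrow> g' x"
        unfolding tendsto_at_iff_sequentially comp_def .
      have B: "(\<lambda>i. X (i + N)) \<longlonglongrightarrow> 0" using X by (rule LIMSEQ_ignore_initial_segment)
      have C: "\<And>i. X (i + N) \<in> UNIV - {0}" using X0 by auto
      show "(\<lambda>i. s i x) \<longlonglongrightarrow> g' x"
        unfolding s_def using A[rule_format, of "\<lambda>i. X (i + N)", OF C B] .
    qed
    show "AE x in M. norm (s i x) \<le> w x" for i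
      using bnd[OF Xn(1)[of i] Xn(2)[of i]] unfolding s_def by auto
  qed
  moreover have "integral\<^sup>L M (s i) = ((\<integral>x. g (m + X (i + N)) x \<partial>M) - (\<integral>x. g m x \<partial>M)) / X (i + N)" for i
  proof -
    have i1: "integrable M (g (m + X (i + N)))" using int Xn by auto
    have i2: "integrable M (g m)" using int r by auto
    show ?thesis unfolding s_def using i1 i2 by simp
  qed
  ultimately have "(\<lambda>i. ((\<lambda>h. ((\<integral>x. g (m + h) x \<partial>M) - (\<integral>x. g m x \<partial>M)) / h) \<circ> X) (i + N)) \<longlonglongrightarrow> integral\<^sup>L M g'"
    by (simp add: comp_def)
  then show "((\<lambda>h. ((\<integral>x. g (m + h) x \<partial>M) - (\<integral>x. g m x \<partial>M)) / h) \<circ> X) \<longlonglongrightarrow> integral\<^sup>L M g'"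
    by (rule LIMSEQ_offset)
qed

definition gdd :: "nat \<Rightarrow> real \<Rightarrow> (nat \<Rightarrow> real) \<Rightarrow> real" where
  "gdd n t y = (n / t - t * qf n y) * gd n t y"

lemma qf_nonneg: "qf n y \<ge> 0"
  unfolding qf_def by (intro sum_nonneg) auto

lemma gd_DERIV:
  assumes t: "t > 0"
  shows "((\<lambda>t. gd n t y) has_real_derivative gdd n t y) (at t)"
proof -
  define c where "c = sqrt (2 * pi)"
  have c: "c > 0" unfolding c_def by simp
  define q where "q = qf n y"
  have d1: "((\<lambda>t. (t / c) ^ n) has_real_derivative (n * (t / c) ^ (n - 1) * (1 / c))) (at t)"
    using c by (auto intro!: derivative_eq_intros)
  have d2: "((\<lambda>t. exp (- (t\<^sup>2 * q) / 2)) has_real_derivative (exp (- (t\<^sup>2 * q) / 2) * (- (t * q)))) (at t)"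
    by (auto intro!: derivative_eq_intros simp: power2_eq_square)
  have d: "((\<lambda>t. (t / c) ^ n * exp (- (t\<^sup>2 * q) / 2)) has_real_derivative
      (n * (t / c) ^ (n - 1) * (1 / c)) * exp (- (t\<^sup>2 * q) / 2)
        + (exp (- (t\<^sup>2 * q) / 2) * (- (t * q))) * (t / c) ^ n) (at t)"
    by (rule DERIV_mult[OF d1 d2])
  have e: "(n * (t / c) ^ (n - 1) * (1 / c)) * exp (- (t\<^sup>2 * q) / 2)
        + (exp (- (t\<^sup>2 * q) / 2) * (- (t * q))) * (t / c) ^ n
      = (n / t - t * q) * ((t / c) ^ n * exp (- (t\<^sup>2 * q) / 2))"
  proof (cases n)
    case 0
    then show ?thesis by simp
  next
    case (Suc k)
    have "(t / c) ^ n = (t / c) ^ k * (t / c)" using Suc by simp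
    then show ?thesis using Suc t c
      by (simp add: field_simps)
  qed
  show ?thesis
    using d unfolding e gdd_def gd_def c_def[symmetric] q_def[symmetric] .
qed

lemma gdd_bound:
  assumes m: "m > 0" and xi: "m / 2 \<le> xi" "xi \<le> 2 * m" and q: "qf n y \<le> Q"
  shows "\<bar>gdd n xi y\<bar> \<le> (2 * real n / m + 2 * m * Q) * (2 * m) ^ n"
proof -
  have xip: "xi > 0" using m xi by simp
  have c1: "sqrt (2 * pi) \<ge> 1" using pi_gt3 by simp
  have q0: "qf n y \<ge> 0" by (rule qf_nonneg)
  have g0: "gd n xi y \<ge> 0" using xip by (rule gd_nonneg)
  have "gd n xi y \<le> (xi / sqrt (2 * pi)) ^ n * 1"
    unfolding gd_def using xip q0 by (intro mult_left_mono) auto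
  also have "\<dots> \<le> (2 * m) ^ n"
  proof -
    have "xi / sqrt (2 * pi) \<le> xi" using xip c1 by (simp add: divide_le_eq_1 field_simps)
    then have "xi / sqrt (2 * pi) \<le> 2 * m" using xi by linarith
    then have "(xi / sqrt (2 * pi)) ^ n \<le> (2 * m) ^ n" using xip by (intro power_mono) auto
    then show ?thesis by simp
  qed
  finally have gb: "gd n xi y \<le> (2 * m) ^ n" .
  have a1: "n / xi \<ge> 0" "xi * qf n y \<ge> 0" using xip q0 by auto
  have "\<bar>n / xi - xi * qf n y\<bar> \<le> n / xi + xi * qf n y" using a1 by (simp add: abs_le_iff)
  also have "\<dots> \<le> 2 * real n / m + 2 * m * Q"
  proof (rule add_mono)
    have "n / xi \<le> n / (m / 2)" using xi m xip by (intro divide_left_mono) auto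
    then show "n / xi \<le> 2 * real n / m" by (simp add: mult.commute)
    show "xi * qf n y \<le> 2 * m * Q" using xi q q0 by (intro mult_mono) auto
  qed
  finally have ab: "\<bar>n / xi - xi * qf n y\<bar> \<le> 2 * real n / m + 2 * m * Q" .
  have "\<bar>gdd n xi y\<bar> = \<bar>n / xi - xi * qf n y\<bar> * gd n xi y"
    unfolding gdd_def using g0 by (simp add: abs_mult)
  also have "\<dots> \<le> (2 * real n / m + 2 * m * Q) * (2 * m) ^ n"
    using ab gb g0 by (intro mult_mono) auto
  finally show ?thesis .
qed

definition SK :: "nat \<Rightarrow> (nat \<Rightarrow> real) set \<Rightarrow> (nat \<Rightarrow> real) set" where
  "SK n K = {y \<in> space (gauss_space n). embed n y \<in> K}"

lemma embed_meas: "embed n \<in> borel_measurable (gauss_space n)"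
proof (rule measurable_coordinatewise_then_product)
  fix i
  show "(\<lambda>x. embed n x i) \<in> borel_measurable (gauss_space n)"
  proof (cases "i < n")
    case True
    then have "(\<lambda>x. x i) \<in> measurable (gauss_space n) GG"
      unfolding gauss_space_def by (intro measurable_component_singleton) auto
    moreover have "sets GG = sets (borel::real measure)" by simp
    ultimately have "(\<lambda>x. x i) \<in> borel_measurable (gauss_space n)"
      using measurable_cong_sets[OF refl, of GG borel "gauss_space n"] by simp
    then show ?thesis using True by (simp add: embed_def)
  next
    case False
    then show ?thesis by (simp add: embed_def)
  qed
qed

lemma SK_sets:
  assumes "symmetric_convex_body n K"
  shows "SK n K \<in> sets (gauss_space n)" "SK n K \<in> sets (Lb n)"
proof -
  have "K \<in> sets borel" using scb_basic(3)[OF assms] by (rule borel_closed)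
  then have "embed n -` K \<inter> space (gauss_space n) \<in> sets (gauss_space n)"
    using embed_meas by (rule measurable_sets[rotated])
  moreover have "embed n -` K \<inter> space (gauss_space n) = SK n K" by (auto simp: SK_def)
  ultimately show "SK n K \<in> sets (gauss_space n)" by simp
  then show "SK n K \<in> sets (Lb n)" by (simp add: sets_gauss)
qed

lemma SK_bound:
  assumes "symmetric_convex_body n K"
  shows "\<exists>Q. \<forall>y\<in>SK n K. qf n y \<le> Q"
proof -
  have "\<exists>R. \<forall>x\<in>K. \<bar>x i\<bar> \<le> R" for i
  proof -
    have "compact ((\<lambda>x. x i) ` K)"
      using scb_basic(2)[OF assms]
      by (rule compact_continuous_image[rotated]) (rule continuous_on_subset[OF continuous_on_product_coordinates], simp)
    then have "bounded ((\<lambda>x. x i) ` K)" by (rule compact_imp_bounded)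
    then show ?thesis unfolding bounded_real by auto
  qed
  then obtain R where R: "\<And>i x. x \<in> K \<Longrightarrow> \<bar>x i\<bar> \<le> R i" by metis
  have "qf n y \<le> (\<Sum>i<n. (R i)\<^sup>2)" if y: "y \<in> SK n K" for y
  proof -
    have yK: "embed n y \<in> K" using y by (simp add: SK_def)
    show ?thesis unfolding qf_def
    proof (rule sum_mono)
      fix i assume "i \<in> {..<n}"
      then have "embed n y i = y i" by (simp add: embed_def)
      then have "\<bar>y i\<bar> \<le> R i" using R[OF yK, of i] by simp
      then show "(y i)\<^sup>2 \<le> (R i)\<^sup>2"
        by (metis abs_ge_zero order_trans power2_abs power_mono)
    qed
  qed
  then show ?thesis by blast
qed

lemma SK_fin:
  assumes "symmetric_convex_body n K"
  shows "emeasure (Lb n) (SK n K) < \<infinity>"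
proof -
  obtain Q where Q: "\<And>y. y \<in> SK n K \<Longrightarrow> qf n y \<le> Q" using SK_bound[OF assms] by blast
  interpret L: product_sigma_finite "\<lambda>_::nat. lborel" by (rule psf_lborel)
  have sub: "SK n K \<subseteq> PiE {..<n} (\<lambda>_. {- sqrt Q..sqrt Q})"
  proof
    fix y assume y: "y \<in> SK n K"
    then have ys: "y \<in> PiE {..<n} (\<lambda>_. UNIV)"
      by (simp add: SK_def gauss_space_def space_PiM)
    have "\<bar>y i\<bar> \<le> sqrt Q" if "i < n" for i
    proof -
      have "(y i)\<^sup>2 \<le> qf n y" unfolding qf_def
        using that by (intro member_le_sum) auto
      then have "(y i)\<^sup>2 \<le> Q" using Q[OF y] by simp
      then show ?thesis using real_sqrt_le_mono by fastforce
    qed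
    then have "y i \<in> {- sqrt Q..sqrt Q}" if "i < n" for i
    proof -
      have "\<bar>y i\<bar> \<le> sqrt Q" using that \<open>\<And>i. i < n \<Longrightarrow> \<bar>y i\<bar> \<le> sqrt Q\<close> by blast
      then have "y i \<le> sqrt Q" "- y i \<le> sqrt Q" by (auto simp: abs_le_iff)
      then show ?thesis by auto
    qed
    then show "y \<in> PiE {..<n} (\<lambda>_. {- sqrt Q..sqrt Q})"
      using ys by (auto simp: PiE_def)
  qed
  have "emeasure (Lb n) (SK n K) \<le> emeasure (Lb n) (PiE {..<n} (\<lambda>_. {- sqrt Q..sqrt Q}))"
    unfolding Lb_def by (intro emeasure_mono sub) (intro sets_PiM_I_finite; simp)
  also have "\<dots> = (\<Prod>i<n. emeasure lborel {- sqrt Q..sqrt Q})"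
    unfolding Lb_def by (rule L.emeasure_PiM) auto
  also have "\<dots> < \<infinity>"
    by (simp add: less_top[symmetric] power_eq_top_ennreal emeasure_lborel_Icc_eq)
  finally show ?thesis .
qed

lemma sc_in_space: "z \<in> space (gauss_space n) \<Longrightarrow> sc n t z \<in> space (gauss_space n)"
  using measurable_space[OF sc_meas] .

lemma embed_sc: "embed n (sc n t y) = (\<lambda>i. embed n y i / t)"
  by (auto simp: embed_def sc_def compose_def)

lemma prob_gauss: "prob_space (gauss_space n)"
proof -
  interpret PP: product_prob_space "\<lambda>_::nat. GG" "{..<n}" by (rule pps_GG)
  show ?thesis unfolding gauss_space_def by (rule PP.P.prob_space_axioms)
qed

lemma F_eq:
  assumes K: "symmetric_convex_body n K" and t: "t > 0"
  shows "F_K n K t = (\<integral>y. gd n t y * indicator (SK n K) y \<partial>Lb n)"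
proof -
  let ?N = "gauss_space n"
  interpret P: prob_space ?N by (rule prob_gauss)
  have seteq: "{x \<in> space ?N. embed n x \<in> {x \<in> Rn n. gauge K x \<le> t}} = sc n t -` SK n K \<inter> space ?N"
  proof (intro set_eqI iffI)
    fix x assume x: "x \<in> {x \<in> space ?N. embed n x \<in> {x \<in> Rn n. gauge K x \<le> t}}"
    then have "(\<lambda>i. embed n x i / t) \<in> K" using gauge_le_iff[OF K _ t] by auto
    then show "x \<in> sc n t -` SK n K \<inter> space ?N" using x sc_in_space
      by (auto simp: SK_def embed_sc)
  next
    fix x assume x: "x \<in> sc n t -` SK n K \<inter> space ?N"
    have er: "embed n x \<in> Rn n" by (simp add: embed_def Rn_def)
    have "(\<lambda>i. embed n x i / t) \<in> K" using x by (simp add: SK_def embed_sc)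
    then show "x \<in> {x \<in> space ?N. embed n x \<in> {x \<in> Rn n. gauge K x \<le> t}}"
      using gauge_le_iff[OF K er t] x er by auto
  qed
  have Sm: "SK n K \<in> sets ?N" using SK_sets[OF K] by simp
  have pre: "sc n t -` SK n K \<inter> space ?N \<in> sets ?N"
    using sc_meas Sm by (rule measurable_sets)
  have "F_K n K t = measure ?N (sc n t -` SK n K \<inter> space ?N)"
    unfolding F_K_def gamma_def seteq ..
  also have "\<dots> = (\<integral>z. indicator (sc n t -` SK n K \<inter> space ?N) z \<partial>?N)"
    using pre by simp
  also have "\<dots> = (\<integral>z. indicator (SK n K) (sc n t z) \<partial>?N)"
    by (intro Bochner_Integration.integral_cong) (auto simp: indicator_def)
  also have "\<dots> = (\<integral>y. gd n t y * indicator (SK n K) y \<partial>Lb n)"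
    using SK_sets(2)[OF K] t by (intro KI[symmetric]) auto
  finally show ?thesis .
qed

lemma qf_meas_Lb[measurable]: "qf n \<in> borel_measurable (Lb n)"
  unfolding qf_def Lb_def by measurable

lemma qf_meas_N[measurable]: "qf n \<in> borel_measurable (gauss_space n)"
  unfolding qf_def gauss_space_def by measurable

lemma gdd_meas[measurable]: "gdd n t \<in> borel_measurable (Lb n)"
  unfolding gdd_def by measurable

lemma gd_le: "t > 0 \<Longrightarrow> gd n t y \<le> (t / sqrt (2 * pi)) ^ n"
  unfolding gd_def using qf_nonneg[of n y]
  by (intro mult_left_le) auto

lemma gd_lip:
  assumes m: "m > 0" and h: "h \<noteq> 0" "\<bar>h\<bar> < m / 2" and q: "qf n y \<le> Q"
  shows "\<bar>(gd n (m + h) y - gd n m y) / h\<bar> \<le> (2 * real n / m + 2 * m * Q) * (2 * m) ^ n"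
proof (cases "h > 0")
  case True
  have "\<exists>z. m < z \<and> z < m + h \<and> gd n (m + h) y - gd n m y = (m + h - m) * gdd n z y"
    by (rule MVT2) (use True m in \<open>auto intro!: gd_DERIV\<close>)
  then obtain z where z: "m < z" "z < m + h" "gd n (m + h) y - gd n m y = h * gdd n z y" by auto
  have "(gd n (m + h) y - gd n m y) / h = gdd n z y" using z(3) h by simp
  moreover have "\<bar>gdd n z y\<bar> \<le> (2 * real n / m + 2 * m * Q) * (2 * m) ^ n"
    using z h m q by (intro gdd_bound) auto
  ultimately show ?thesis by simp
next
  case False
  then have hn: "h < 0" using h by simp
  have "\<exists>z. m + h < z \<and> z < m \<and> gd n m y - gd n (m + h) y = (m - (m + h)) * gdd n z y"
    by (rule MVT2) (use hn h m in \<open>auto intro!: gd_DERIV\<close>)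
  then obtain z where z: "m + h < z" "z < m" "gd n m y - gd n (m + h) y = (- h) * gdd n z y" by auto
  have "(gd n (m + h) y - gd n m y) / h = gdd n z y" using z(3) h by (simp add: field_simps)
  moreover have "\<bar>gdd n z y\<bar> \<le> (2 * real n / m + 2 * m * Q) * (2 * m) ^ n"
    using z h m q by (intro gdd_bound) auto
  ultimately show ?thesis by simp
qed

lemma H_deriv:
  assumes K: "symmetric_convex_body n K" and m: "m > 0"
  shows "((\<lambda>t. \<integral>y. gd n t y * indicator (SK n K) y \<partial>Lb n) has_real_derivative
          (\<integral>y. gdd n m y * indicator (SK n K) y \<partial>Lb n)) (at m)"
proof -
  obtain Q where Q: "\<And>y. y \<in> SK n K \<Longrightarrow> qf n y \<le> Q" using SK_bound[OF K] by blast
  define B where "B = (2 * real n / m + 2 * m * Q) * (2 * m) ^ n"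
  have Sm[measurable]: "SK n K \<in> sets (Lb n)" using SK_sets[OF K] by simp
  have fin: "emeasure (Lb n) (SK n K) < \<infinity>" using SK_fin[OF K] .
  have intS: "integrable (Lb n) (\<lambda>y. c * indicator (SK n K) y)" for c :: real
    using integrable_real_indicator[OF Sm fin] by simp
  show ?thesis
  proof (rule DERIV_integral_dominated[where r="m/2" and w="\<lambda>y. B * indicator (SK n K) y"])
    show "(\<lambda>y. gd n t y * indicator (SK n K) y) \<in> borel_measurable (Lb n)" for t by measurable
    show "(\<lambda>y. gdd n m y * indicator (SK n K) y) \<in> borel_measurable (Lb n)" by measurable
    show "0 < m / 2" using m by simp
    show "integrable (Lb n) (\<lambda>y. gd n t y * indicator (SK n K) y)" if t: "\<bar>t - m\<bar> < m / 2" for t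
    proof (rule Bochner_Integration.integrable_bound[OF intS[of "(t / sqrt (2 * pi)) ^ n"]])
      show "(\<lambda>y. gd n t y * indicator (SK n K) y) \<in> borel_measurable (Lb n)" by measurable
      have tp: "t > 0" using t m by linarith
      show "AE y in Lb n. norm (gd n t y * indicator (SK n K) y)
          \<le> norm ((t / sqrt (2 * pi)) ^ n * indicator (SK n K) y)"
        using gd_le[OF tp] gd_nonneg[OF tp] tp by (auto simp: indicator_def)
    qed
    show "((\<lambda>t. gd n t y * indicator (SK n K) y) has_real_derivative gdd n m y * indicator (SK n K) y) (at m)"
      if "y \<in> space (Lb n)" for y
      by (rule DERIV_cmult_right[OF gd_DERIV[OF m]])
    show "integrable (Lb n) (\<lambda>y. B * indicator (SK n K) y)" by (rule intS)
    show "\<bar>(gd n (m + h) y * indicator (SK n K) y - gd n m y * indicator (SK n K) y) / h\<bar>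
        \<le> B * indicator (SK n K) y"
      if "h \<noteq> 0" "\<bar>h\<bar> < m / 2" "y \<in> space (Lb n)" for h y
    proof (cases "y \<in> SK n K")
      case True
      then show ?thesis using gd_lip[OF m that(1,2) Q[OF True]] by (simp add: B_def)
    next
      case False
      then show ?thesis by simp
    qed
  qed
qed

lemma qf_sc:
  assumes "m > 0"
  shows "m\<^sup>2 * qf n (sc n m z) = qf n z"
proof -
  have "m\<^sup>2 * qf n (sc n m z) = (\<Sum>i<n. m\<^sup>2 * (z i / m)\<^sup>2)"
    by (simp add: qf_def sc_def compose_def sum_distrib_left)
  also have "\<dots> = qf n z" using assms by (simp add: qf_def power_divide)
  finally show ?thesis .
qed

lemma amgm_bound:
  fixes a s :: real assumes s: "s > 0"
  shows "\<bar>a\<bar> \<le> a\<^sup>2 / (2 * s) + s / 2"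
proof -
  have "0 \<le> (\<bar>a\<bar> - s)\<^sup>2" by simp
  then have "2 * s * \<bar>a\<bar> \<le> a\<^sup>2 + s\<^sup>2" by (simp add: power2_eq_square algebra_simps)
  then show ?thesis using s by (simp add: field_simps power2_eq_square)
qed

lemma vartheta_bound_pos:
  assumes K: "symmetric_convex_body n K" and m: "m > 0" and n: "n \<ge> 1"
  shows "vartheta n K m \<le> 2 * sqrt (real n)"
proof -
  let ?N = "gauss_space n"
  let ?S = "SK n K"
  interpret P: prob_space ?N by (rule prob_gauss)
  define D where "D = (\<integral>y. gdd n m y * indicator ?S y \<partial>Lb n)"
  have HD: "((\<lambda>t. \<integral>y. gd n t y * indicator ?S y \<partial>Lb n) has_real_derivative D) (at m)"
    unfolding D_def by (rule H_deriv[OF K m])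
  have FD: "(F_K n K has_real_derivative D) (at m)"
    by (rule has_field_derivative_transform_within_open[OF HD, of "{0<..}"])
       (use m F_eq[OF K] in auto)
  then have dv: "deriv (F_K n K) m = D" by (rule DERIV_imp_deriv)
  have Sm[measurable]: "?S \<in> sets (Lb n)" "?S \<in> sets ?N" using SK_sets[OF K] by auto
  have "m * D = (\<integral>y. m * (gdd n m y * indicator ?S y) \<partial>Lb n)"
    unfolding D_def by simp
  also have "\<dots> = (\<integral>y. gd n m y * (indicator ?S y * (real n - m\<^sup>2 * qf n y)) \<partial>Lb n)"
    using m by (intro Bochner_Integration.integral_cong refl)
      (simp add: gdd_def field_simps power2_eq_square)
  also have "\<dots> = (\<integral>z. indicator ?S (sc n m z) * (real n - m\<^sup>2 * qf n (sc n m z)) \<partial>?N)"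
    using m by (intro KI) auto
  also have "\<dots> = (\<integral>z. indicator ?S (sc n m z) * (real n - qf n z) \<partial>?N)"
    using m by (simp add: qf_sc)
  also have "\<dots> \<le> (\<integral>z. (qf n z - real n)\<^sup>2 / (2 * sqrt n) + sqrt n / 2 \<partial>?N)"
  proof -
    have sp: "sqrt (real n) > 0" using n by simp
    have iR: "integrable ?N (\<lambda>z. (qf n z - real n)\<^sup>2 / (2 * sqrt n) + sqrt n / 2)"
      using variance_qf(1)[of n] by simp
    have pw: "indicator ?S (sc n m z) * (real n - qf n z) \<le> (qf n z - real n)\<^sup>2 / (2 * sqrt n) + sqrt n / 2"
      for z
    proof -
      have "indicator ?S (sc n m z) * (real n - qf n z) \<le> \<bar>real n - qf n z\<bar>"
        by (auto simp: indicator_def)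
      also have "\<dots> \<le> (real n - qf n z)\<^sup>2 / (2 * sqrt n) + sqrt n / 2" by (rule amgm_bound[OF sp])
      also have "(real n - qf n z)\<^sup>2 = (qf n z - real n)\<^sup>2" by (simp add: power2_commute)
      finally show ?thesis .
    qed
    have mL: "(\<lambda>z. indicator ?S (sc n m z) * (real n - qf n z)) \<in> borel_measurable ?N"
      using sc_meas by measurable
    have iL: "integrable ?N (\<lambda>z. indicator ?S (sc n m z) * (real n - qf n z))"
    proof (rule Bochner_Integration.integrable_bound[OF iR mL])
      show "AE z in ?N. norm (indicator ?S (sc n m z) * (real n - qf n z))
          \<le> norm ((qf n z - real n)\<^sup>2 / (2 * sqrt n) + sqrt n / 2)"
      proof (rule AE_I2)
        fix z
        have "norm (indicator ?S (sc n m z) * (real n - qf n z)) \<le> \<bar>real n - qf n z\<bar>"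
          by (auto simp: indicator_def)
        also have "\<dots> \<le> (real n - qf n z)\<^sup>2 / (2 * sqrt n) + sqrt n / 2" by (rule amgm_bound[OF sp])
        also have "\<dots> = norm ((qf n z - real n)\<^sup>2 / (2 * sqrt n) + sqrt n / 2)"
          using sp by (simp add: power2_commute)
        finally show "norm (indicator ?S (sc n m z) * (real n - qf n z))
          \<le> norm ((qf n z - real n)\<^sup>2 / (2 * sqrt n) + sqrt n / 2)" .
      qed
    qed
    show ?thesis by (rule integral_mono[OF iL iR pw])
  qed
  also have "\<dots> = (2 * real n) / (2 * sqrt n) + sqrt n / 2"
    using variance_qf[of n] by (simp add: integral_add P.prob_space)
  also have "\<dots> \<le> 2 * sqrt n"
  proof -
    have sp: "sqrt (real n) > 0" using n by simp
    have "(2 * real n) / (2 * sqrt n) = sqrt n"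
      using sp by (simp add: field_simps)
    then show ?thesis using sp by simp
  qed
  finally have "m * D \<le> 2 * sqrt n" .
  then show ?thesis unfolding vartheta_def dv .
qed

theorem corollary5p11:
  shows "\<exists>C>0. \<forall>n::nat. \<forall>K m. n \<ge> 1 \<longrightarrow> symmetric_convex_body n K \<longrightarrow> is_median n K m
            \<longrightarrow> vartheta n K m \<le> C * sqrt (real n)"
proof (intro exI[of _ 2] conjI allI impI)
  fix n :: nat and K m
  assume n: "n \<ge> 1" and K: "symmetric_convex_body n K" and med: "is_median n K m"
  show "vartheta n K m \<le> 2 * sqrt (real n)"
  proof (cases "m > 0")
    case True
    then show ?thesis using vartheta_bound_pos[OF K True n] by simp
  next
    case False
    show ?thesis
    proof (cases "m = 0")
      case True
      then show ?thesis by (simp add: vartheta_def)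
    next
      case False2: False
      then have mn: "m < 0" using False by simp
      have e: "{x \<in> Rn n. gauge K x \<le> m} = {}"
        using gauge_nonneg[OF K] mn by fastforce
      have "gamma n {} = 0" by (simp add: gamma_def)
      then have "gamma n {x \<in> Rn n. gauge K x \<le> m} = 0" by (simp only: e)
      with med show ?thesis by (simp add: is_median_def)
    qed
  qed
qed simp

end
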